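(* Let $\mathfrak R$ be either the Sierpiński gasket iterated graph system or the pentagonal Sierpiński carpet iterated graph system, with replacement graphs $G_m$, and let $n\in\mathbb N$. For every $\tilde w\in W_\#$ there is a folding of $G_{n+|\tilde w|}$ onto $\tilde w\cdot W_n:=\{\tilde w u:u\in W_n\}$.
   Context: Graphs: $(V,E)$ with $V$ finite non-empty, $E\subseteq V\times V$, $(x,y)\in E\Rightarrow(y,x)\notin E$; $\{x,y\}\in E$ means either orientation. A mapping between graphs $\varphi:G\to G'$ maps vertices so that each edge $\{x,y\}$ has $\varphi(x)=\varphi(y)$ or $\{\varphi(x),\varphi(y)\}\in E(G')$. A folding of $G$ onto $U\subseteq V(G)$ is a mapping between graphs $\varphi:G\to\langle U\rangle$ (induced subgraph) with $\varphi|_U=\mathrm{id}_U$. An iterated graph system consists of a connected graph $G_1=(S,E)$, a finite set $\mathcal T$ of types, a surjective typing $\mathfrak t:E\to\mathcal T$ and gluing rules $I_t\subseteq S\times S$. With $W_m=S^m$, $W_\#=\bigcup_{m\ge1}W_m$, $[w]_k=w_1\cdots w_k$, the replacement graphs $G_m=(W_m,E_m)$ are defined recursively: $(w,v)\in E_{m+1}$ iff either (1) $[w]_m=[v]_m$ and $(w_{m+1},v_{m+1})\in E$ (type $\mathfrak t(w_{m+1},v_{m+1})$), or (2) $([w]_m,[v]_m)\in E_m$ and $(w_{m+1},v_{m+1})\in I_{\mathfrak t([w]_m,[v]_m)}$ (type $\mathfrak t([w]_m,[v]_m)$). Sierpiński gasket: $S=\{0,1,2\}$, $E=\{(0,1),(1,2),(0,2)\}$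 with types $a,b,c$ respectively, $I_a=\{(1,0)\}$, $I_b=\{(2,1)\}$, $I_c=\{(2,0)\}$. Pentagonal Sierpiński carpet: $S=\{0,1,2,3,4\}$, $E=\{(0,1),(1,2),(2,3),(3,4),(4,0)\}$ with types $a,b,c,d,e$ respectively, $I_a=\{(1,0),(2,4)\}$, $I_b=\{(2,1),(3,0)\}$, $I_c=\{(3,2),(4,1)\}$, $I_d=\{(4,3),(0,2)\}$, $I_e=\{(0,4),(1,3)\}$. *)

theory Defs
  imports Main
begin

definition has_edge :: "('v \<times> 'v) set \<Rightarrow> 'v \<Rightarrow> 'v \<Rightarrow> bool" where
  "has_edge E x y \<longleftrightarrow> (x, y) \<in> E \<or> (y, x) \<in> E"

definition graph_mapping ::
  "'v set \<Rightarrow> ('v \<times> 'v) set \<Rightarrow> 'w set \<Rightarrow> ('w \<times> 'w) set \<Rightarrow> ('v \<Rightarrow> 'w) \<Rightarrow> bool" where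
  "graph_mapping V E V' E' \<phi> \<longleftrightarrow>
     (\<forall>x\<in>V. \<phi> x \<in> V') \<and>
     (\<forall>x y. (x, y) \<in> E \<longrightarrow> \<phi> x = \<phi> y \<or> has_edge E' (\<phi> x) (\<phi> y))"

definition induced_edges :: "('v \<times> 'v) set \<Rightarrow> 'v set \<Rightarrow> ('v \<times> 'v) set" where
  "induced_edges E U = E \<inter> (U \<times> U)"

definition graph_folding :: "'v set \<Rightarrow> ('v \<times> 'v) set \<Rightarrow> 'v set \<Rightarrow> ('v \<Rightarrow> 'v) \<Rightarrow> bool" where
  "graph_folding V E U \<phi> \<longleftrightarrow> U \<subseteq> V \<and> graph_mapping V E U (induced_edges E U) \<phi> \<and> (\<forall>x\<in>U. \<phi> x = x)"

record igs =
  igs_S :: "nat set"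
  igs_E :: "(nat \<times> nat) set"
  igs_type :: "nat \<times> nat \<Rightarrow> nat"
  igs_glue :: "nat \<Rightarrow> (nat \<times> nat) set"

definition words :: "igs \<Rightarrow> nat \<Rightarrow> nat list set" where
  "words R m = {w. length w = m \<and> set w \<subseteq> igs_S R}"

definition all_words :: "igs \<Rightarrow> nat list set" where
  "all_words R = (\<Union>m\<in>{1..}. words R m)"

fun typed_edges :: "igs \<Rightarrow> nat \<Rightarrow> ((nat list \<times> nat list) \<times> nat) set" where
  "typed_edges R 0 = {}"
| "typed_edges R (Suc 0) = {(([a], [b]), igs_type R (a, b)) | a b. (a, b) \<in> igs_E R}"
| "typed_edges R (Suc (Suc m)) =
     {((w @ [a], w @ [b]), igs_type R (a, b)) | w a b. w \<in> words R (Suc m) \<and> (a, b) \<in> igs_E R}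
   \<union> {((w @ [a], v @ [b]), t) | w v a b t.
        ((w, v), t) \<in> typed_edges R (Suc m) \<and> (a, b) \<in> igs_glue R t}"

definition edges :: "igs \<Rightarrow> nat \<Rightarrow> (nat list \<times> nat list) set" where
  "edges R m = fst ` typed_edges R m"

definition sierpinski_gasket :: igs where
  "sierpinski_gasket =
    \<lparr> igs_S = {0, 1, 2},
      igs_E = {(0, 1), (1, 2), (0, 2)},
      igs_type = (\<lambda>e. if e = (0, 1) then 0 else if e = (1, 2) then 1 else 2),
      igs_glue = (\<lambda>t. if t = 0 then {(1, 0)} else if t = 1 then {(2, 1)} else {(2, 0)}) \<rparr>"

definition pentagonal_carpet :: igs where
  "pentagonal_carpet =
    \<lparr> igs_S = {0, 1, 2, 3, 4},
      igs_E = {(0, 1), (1, 2), (2, 3), (3, 4), (4, 0)},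
      igs_type = fst,
      igs_glue = (\<lambda>t. if t = 0 then {(1, 0), (2, 4)}
                   else if t = 1 then {(2, 1), (3, 0)}
                   else if t = 2 then {(3, 2), (4, 1)}
                   else if t = 3 then {(4, 3), (0, 2)}
                   else {(0, 4), (1, 3)}) \<rparr>"

end

theory Submission
  imports Defs
begin


definition ech :: "igs \<Rightarrow> nat \<Rightarrow> nat list \<Rightarrow> nat list \<Rightarrow> nat \<Rightarrow> bool" where
"ech R m x y t \<longleftrightarrow> (\<exists>z p q u u'. x = z @ p # u \<and> y = z @ q # u' \<and> set z \<subseteq> igs_S R
   \<and> (p, q) \<in> igs_E R \<and> t = igs_type R (p, q)
   \<and> list_all2 (\<lambda>a b. (a, b) \<in> igs_glue R t) u u' \<and> m = Suc (length z + length u))"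

lemma te_char_Suc: "((x, y), t) \<in> typed_edges R (Suc k) \<longleftrightarrow> ech R (Suc k) x y t"
proof (induction k arbitrary: x y t)
  case 0
  show ?case
  proof
    assume "((x, y), t) \<in> typed_edges R (Suc 0)"
    then obtain a b where "x = [a]" "y = [b]" "t = igs_type R (a,b)" "(a,b) \<in> igs_E R" by auto
    then show "ech R (Suc 0) x y t" unfolding ech_def
      by (rule_tac x="[]" in exI) auto
  next
    assume "ech R (Suc 0) x y t"
    then obtain z p q u u' where h: "x = z @ p # u" "y = z @ q # u'" 
      "(p, q) \<in> igs_E R" "t = igs_type R (p, q)" "list_all2 (\<lambda>a b. (a, b) \<in> igs_glue R t) u u'"
      "Suc 0 = Suc (length z + length u)" unfolding ech_def by blast
    then have "z = []" "u = []" "u' = []" by (auto dest: list_all2_lengthD)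
    with h show "((x, y), t) \<in> typed_edges R (Suc 0)" by auto
  qed
next
  case (Suc k)
  show ?case
  proof
    assume "((x, y), t) \<in> typed_edges R (Suc (Suc k))"
    then consider (a) w a b where "x = w @ [a]" "y = w @ [b]" "t = igs_type R (a,b)"
        "w \<in> words R (Suc k)" "(a,b) \<in> igs_E R"
      | (b) w v a b where "x = w @ [a]" "y = v @ [b]" "((w, v), t) \<in> typed_edges R (Suc k)"
        "(a, b) \<in> igs_glue R t"
      by auto
    then show "ech R (Suc (Suc k)) x y t"
    proof cases
      case a
      then show ?thesis unfolding ech_def words_def
        by (rule_tac x=w in exI) auto
    next
      case b
      from b(3) Suc.IH obtain z p q u u' where h: "w = z @ p # u" "v = z @ q # u'" "set z \<subseteq> igs_S R"
      "(p, q) \<in> igs_E R" "t = igs_type R (p, q)" "list_all2 (\<lambda>a b. (a, b) \<in> igs_glue R t) u u'"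
      "Suc k = Suc (length z + length u)" unfolding ech_def by blast
      show ?thesis unfolding ech_def
        apply (rule exI[of _ z], rule exI[of _ p], rule exI[of _ q], rule exI[of _ "u @ [a]"], rule exI[of _ "u' @ [b]"])
        using h b by (auto simp: list_all2_appendI)
    qed
  next
    assume "ech R (Suc (Suc k)) x y t"
    then obtain z p q u u' where h: "x = z @ p # u" "y = z @ q # u'" "set z \<subseteq> igs_S R"
      "(p, q) \<in> igs_E R" "t = igs_type R (p, q)" "list_all2 (\<lambda>a b. (a, b) \<in> igs_glue R t) u u'"
      "Suc (Suc k) = Suc (length z + length u)" unfolding ech_def by blast
    show "((x, y), t) \<in> typed_edges R (Suc (Suc k))"
    proof (cases u rule: rev_cases)
      case Nil
      then have "u' = []" using h(6) by auto
      then have xy: "x = z @ [p]" "y = z @ [q]" and zw: "z \<in> words R (Suc k)" using h Nil by (auto simp: words_def)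
      show ?thesis unfolding typed_edges.simps(3) xy h(5)
        apply (rule UnI1) using zw h(4) by simp
    next
      case (snoc u0 a)
      then obtain u0' b where u': "u' = u0' @ [b]" "list_all2 (\<lambda>a b. (a, b) \<in> igs_glue R t) u0 u0'"
        "(a, b) \<in> igs_glue R t"
      proof -
        from h(6)[unfolded snoc list_all2_append1] obtain us vs where
          uv: "u' = us @ vs" "list_all2 (\<lambda>a b. (a, b) \<in> igs_glue R t) u0 us"
              "list_all2 (\<lambda>a b. (a, b) \<in> igs_glue R t) [a] vs" by blast
        from uv(3) obtain b where "vs = [b]" "(a, b) \<in> igs_glue R t"
          by (auto simp: list_all2_Cons1)
        with uv show ?thesis using that by blast
      qed
      have "ech R (Suc k) (z @ p # u0) (z @ q # u0') t" unfolding ech_def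
        using h snoc u' by (rule_tac x=z in exI) auto
      then have "((z @ p # u0, z @ q # u0'), t) \<in> typed_edges R (Suc k)" using Suc.IH by blast
      then show ?thesis using h snoc u' by auto
    qed
  qed
qed

lemma edges_char: "(x, y) \<in> edges R m \<longleftrightarrow> (\<exists>t. ech R m x y t)"
proof (cases m)
  case 0
  then show ?thesis by (auto simp: edges_def ech_def)
next
  case (Suc k)
  have "(x, y) \<in> edges R m \<longleftrightarrow> (\<exists>t. ((x, y), t) \<in> typed_edges R m)"
    unfolding edges_def by (simp add: image_iff) (metis fst_conv prod.collapse)
  then show ?thesis using te_char_Suc[of x y _ R k] Suc by simp
qed



definition hom :: "igs \<Rightarrow> nat \<Rightarrow> nat \<Rightarrow> (nat list \<Rightarrow> nat list) \<Rightarrow> bool" where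
"hom R m m' f \<longleftrightarrow> (\<forall>x y. (x, y) \<in> edges R m \<longrightarrow> f x = f y \<or> has_edge (edges R m') (f x) (f y))"

lemma has_edge_sym: "has_edge E x y = has_edge E y x"
  by (auto simp: has_edge_def)

lemma hom_comp: "hom R m m' f \<Longrightarrow> hom R m' m'' g \<Longrightarrow> hom R m m'' (g \<circ> f)"
  unfolding hom_def has_edge_def by (metis comp_apply)

lemma prefix_edge:
  assumes "(u, v) \<in> edges R n" "set w \<subseteq> igs_S R"
  shows "(w @ u, w @ v) \<in> edges R (length w + n)"
proof -
  from assms(1) obtain t z p q a b where h: "u = z @ p # a" "v = z @ q # b" "set z \<subseteq> igs_S R"
   "(p, q) \<in> igs_E R" "t = igs_type R (p, q)"
   "list_all2 (\<lambda>x y. (x, y) \<in> igs_glue R t) a b" "n = Suc (length z + length a)"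
    unfolding edges_char ech_def by blast
  have "ech R (length w + n) (w @ u) (w @ v) t" unfolding ech_def
    apply (rule exI[of _ "w @ z"])
    using h assms(2) by auto
  then show ?thesis unfolding edges_char by blast
qed

fun Phi :: "(nat \<Rightarrow> nat list \<Rightarrow> nat list) \<Rightarrow> nat list \<Rightarrow> nat list \<Rightarrow> nat list" where
  "Phi F [] = id"
| "Phi F (c # w) = Phi F w \<circ> F c"

lemma hom_id: "hom R m m id"
  unfolding hom_def has_edge_def by auto

lemma generic:
  assumes homF: "\<And>c m. c \<in> igs_S R \<Longrightarrow> hom R (Suc m) m (F c)"
    and idF: "\<And>c m x. c \<in> igs_S R \<Longrightarrow> x \<in> words R m \<Longrightarrow> F c (c # x) = x"
    and wF: "\<And>c m x. c \<in> igs_S R \<Longrightarrow> x \<in> words R (Suc m) \<Longrightarrow> F c x \<in> words R m"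
    and w: "set w \<subseteq> igs_S R"
    and ew: "\<And>m x y. (x, y) \<in> edges R m \<Longrightarrow> x \<in> words R m \<and> y \<in> words R m"
  shows "\<exists>\<phi>. graph_folding (words R (n + length w)) (edges R (n + length w))
                   {w @ u | u. u \<in> words R n} \<phi>"
proof -
  have P: "hom R (length w + n) n (Phi F w) \<and>
        (\<forall>x \<in> words R (length w + n). Phi F w x \<in> words R n) \<and>
        (\<forall>u \<in> words R n. Phi F w (w @ u) = u)"
    using w
  proof (induction w)
    case Nil
    then show ?case using hom_id[of R n] by (simp add: id_def)
  next
    case (Cons c w)
    then have IH: "hom R (length w + n) n (Phi F w)"
        "\<forall>x \<in> words R (length w + n). Phi F w x \<in> words R n"
        "\<forall>u \<in> words R n. Phi F w (w @ u) = u" and c: "c \<in> igs_S R" and ws: "set w \<subseteq> igs_S R" by auto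
    have "hom R (length (c # w) + n) n (Phi F (c # w))"
      using hom_comp[OF homF[OF c, of "length w + n"] IH(1)] by simp
    moreover have "\<forall>x \<in> words R (length (c # w) + n). Phi F (c # w) x \<in> words R n"
      using IH(2) wF[OF c, of _ "length w + n"] by simp
    moreover have "\<forall>u \<in> words R n. Phi F (c # w) ((c # w) @ u) = u"
    proof
      fix u assume u: "u \<in> words R n"
      then have "w @ u \<in> words R (length w + n)" using ws by (auto simp: words_def)
      then show "Phi F (c # w) ((c # w) @ u) = u" using idF[OF c] IH(3) u by simp
    qed
    ultimately show ?case by blast
  qed
  let ?U = "{w @ u | u. u \<in> words R n}"
  define \<phi> where "\<phi> x = w @ Phi F w x" for x
  have "graph_folding (words R (n + length w)) (edges R (n + length w)) ?U \<phi>"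
    unfolding graph_folding_def graph_mapping_def
  proof (intro conjI ballI allI impI)
    show "?U \<subseteq> words R (n + length w)" using w by (auto simp: words_def)
  next
    fix x assume "x \<in> words R (n + length w)"
    then show "\<phi> x \<in> ?U" using P by (auto simp: \<phi>_def add.commute)
  next
    fix x y assume e: "(x, y) \<in> edges R (n + length w)"
    then have "Phi F w x = Phi F w y \<or> has_edge (edges R n) (Phi F w x) (Phi F w y)"
      using P unfolding hom_def by (simp add: add.commute)
    then show "\<phi> x = \<phi> y \<or> has_edge (induced_edges (edges R (n + length w)) ?U) (\<phi> x) (\<phi> y)"
    proof
      assume "Phi F w x = Phi F w y" then show ?thesis by (simp add: \<phi>_def)
    next
      assume h: "has_edge (edges R n) (Phi F w x) (Phi F w y)"
      from h have wx: "Phi F w x \<in> words R n \<and> Phi F w y \<in> words R n"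
        using ew unfolding has_edge_def by blast
      from h have "(\<phi> x, \<phi> y) \<in> edges R (n + length w) \<or> (\<phi> y, \<phi> x) \<in> edges R (n + length w)"
        unfolding has_edge_def \<phi>_def using prefix_edge[OF _ w] by (metis add.commute)
      then show ?thesis using wx unfolding has_edge_def induced_edges_def \<phi>_def by blast
    qed
  next
    fix x assume "x \<in> ?U" then show "\<phi> x = x" using P by (auto simp: \<phi>_def)
  qed
  then show ?thesis by blast
qed


lemma edges_words:
  assumes "igs_E R \<subseteq> igs_S R \<times> igs_S R" "\<And>t. igs_glue R t \<subseteq> igs_S R \<times> igs_S R"
    and "(x, y) \<in> edges R m"
  shows "x \<in> words R m \<and> y \<in> words R m"
proof -
  from assms(3) obtain t z p q a b where h: "x = z @ p # a" "y = z @ q # b" "set z \<subseteq> igs_S R"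
   "(p, q) \<in> igs_E R" "list_all2 (\<lambda>x y. (x, y) \<in> igs_glue R t) a b" "m = Suc (length z + length a)"
    unfolding edges_char ech_def by blast
  have "set a \<subseteq> igs_S R \<and> set b \<subseteq> igs_S R" using h(5) assms(2)[of t]
    by (induction a b rule: list_all2_induct) auto
  moreover have "length b = length a" using h(5) by (simp add: list_all2_lengthD)
  ultimately show ?thesis using h assms(1) by (auto simp: words_def)
qed



lemma gS: "igs_S sierpinski_gasket = {0,1,2}" and gE: "igs_E sierpinski_gasket = {(0, 1), (1, 2), (0, 2)}"
  by (simp_all add: sierpinski_gasket_def)

lemma list_all2_single:
  "list_all2 (\<lambda>a b. (a, b) \<in> {(q, p)}) u u' \<Longrightarrow> u = replicate (length u) q \<and> u' = replicate (length u) p"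
  by (induction u u' rule: list_all2_induct) auto

lemma gasket_edge_char:
  assumes "(x, y) \<in> edges sierpinski_gasket m"
  shows "\<exists>z p q j. x = z @ p # replicate j q \<and> y = z @ q # replicate j p \<and> p \<noteq> q \<and> p < 3 \<and> q < 3
     \<and> set z \<subseteq> {0,1,2} \<and> m = Suc (length z + j)"
proof -
  from assms obtain t z p q a b where h: "x = z @ p # a" "y = z @ q # b" "set z \<subseteq> igs_S sierpinski_gasket"
   "(p, q) \<in> igs_E sierpinski_gasket" "t = igs_type sierpinski_gasket (p, q)"
   "list_all2 (\<lambda>x y. (x, y) \<in> igs_glue sierpinski_gasket t) a b" "m = Suc (length z + length a)"
    unfolding edges_char ech_def by blast
  have "igs_glue sierpinski_gasket t = {(q, p)}" using h(4,5) by (auto simp: sierpinski_gasket_def)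
  then have "a = replicate (length a) q \<and> b = replicate (length a) p" using h(6) list_all2_single by metis
  then show ?thesis using h gS gE
    by (rule_tac x=z in exI, rule_tac x=p in exI, rule_tac x=q in exI, rule_tac x="length a" in exI) auto
qed

lemma gasket_edge_intro:
  assumes "p \<noteq> q" "p < 3" "q < 3" "set z \<subseteq> {0,1,2}"
  shows "has_edge (edges sierpinski_gasket (Suc (length z + j))) (z @ p # replicate j q) (z @ q # replicate j p)"
proof -
  have ed: "ech sierpinski_gasket (Suc (length z + j)) (z @ a # replicate j b) (z @ b # replicate j a)
           (igs_type sierpinski_gasket (a, b))"
    if "(a, b) \<in> igs_E sierpinski_gasket" for a b
  proof -
    have "igs_glue sierpinski_gasket (igs_type sierpinski_gasket (a, b)) = {(b, a)}"
      using that by (auto simp: sierpinski_gasket_def)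
    moreover have "list_all2 (\<lambda>x y. (x, y) \<in> {(b, a)}) (replicate j b) (replicate j a)"
      by (induction j) auto
    ultimately show ?thesis unfolding ech_def using that assms(4) gS
      by (rule_tac x=z in exI, rule_tac x=a in exI, rule_tac x=b in exI) auto
  qed
  have "(p, q) \<in> igs_E sierpinski_gasket \<or> (q, p) \<in> igs_E sierpinski_gasket"
  proof -
    have "p = 0 \<or> p = 1 \<or> p = 2" "q = 0 \<or> q = 1 \<or> q = 2" using assms(2,3) by arith+
    then show ?thesis using assms(1) unfolding gE by fastforce
  qed
  then show ?thesis unfolding has_edge_def edges_char using ed by blast
qed

definition Fg :: "nat \<Rightarrow> nat list \<Rightarrow> nat list" where
  "Fg c x = (case x of [] \<Rightarrow> [] | d # x' \<Rightarrow> map (\<lambda>i. (i + (d + 3 - c)) mod 3) x')"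

lemma Fg_hom:
  assumes c: "c \<in> igs_S sierpinski_gasket"
  shows "hom sierpinski_gasket (Suc m) m (Fg c)"
  unfolding hom_def
proof (intro allI impI)
  fix x y assume "(x, y) \<in> edges sierpinski_gasket (Suc m)"
  then obtain z p q j where h: "x = z @ p # replicate j q" "y = z @ q # replicate j p" "p \<noteq> q" "p < 3" "q < 3"
     "set z \<subseteq> {0,1,2}" "Suc m = Suc (length z + j)"
    using gasket_edge_char by blast
  show "Fg c x = Fg c y \<or> has_edge (edges sierpinski_gasket m) (Fg c x) (Fg c y)"
  proof (cases z)
    case Nil
    have "c \<le> 2" using c gS by auto
    then have e: "q + (p + 3 - c) = p + (q + 3 - c)" by arith
    have "Fg c x = replicate j ((q + (p + 3 - c)) mod 3)" "Fg c y = replicate j ((p + (q + 3 - c)) mod 3)"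
      using h Nil by (simp_all add: Fg_def)
    then have "Fg c x = Fg c y" by (simp only: e)
    then show ?thesis by simp
  next
    case (Cons d z')
    define \<sigma> where "\<sigma> i = (i + (d + 3 - c)) mod 3" for i
    have "(p + k) mod 3 \<noteq> (q + k) mod 3" for k using h(3-5) by presburger
    then have "\<sigma> p \<noteq> \<sigma> q" unfolding \<sigma>_def by blast
    moreover have "\<sigma> p < 3" "\<sigma> q < 3" by (auto simp: \<sigma>_def)
    moreover have "set (map \<sigma> z') \<subseteq> {0,1,2}" by (auto simp: \<sigma>_def)
    ultimately have "has_edge (edges sierpinski_gasket (Suc (length (map \<sigma> z') + j)))
        (map \<sigma> z' @ \<sigma> p # replicate j (\<sigma> q)) (map \<sigma> z' @ \<sigma> q # replicate j (\<sigma> p))"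
      by (intro gasket_edge_intro) auto
    moreover have "Fg c x = map \<sigma> z' @ \<sigma> p # replicate j (\<sigma> q)" "Fg c y = map \<sigma> z' @ \<sigma> q # replicate j (\<sigma> p)"
      using h Cons by (simp_all add: Fg_def \<sigma>_def)
    ultimately show ?thesis using h Cons by simp
  qed
qed

lemma gasket_main:
  assumes "set w \<subseteq> igs_S sierpinski_gasket"
  shows "\<exists>\<phi>. graph_folding (words sierpinski_gasket (n + length w)) (edges sierpinski_gasket (n + length w))
                   {w @ u | u. u \<in> words sierpinski_gasket n} \<phi>"
proof (rule generic[OF Fg_hom _ _ assms])
  fix c m x assume c: "c \<in> igs_S sierpinski_gasket" and x: "x \<in> words sierpinski_gasket m"
  from x have "set x \<subseteq> {0,1,2}" by (simp add: words_def gS)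
  then have "\<forall>i \<in> set x. i < 3" by fastforce
  then have "map (\<lambda>i. (i + (c + 3 - c)) mod 3) x = x" by (intro map_idI) auto
  then show "Fg c (c # x) = x" by (simp add: Fg_def)
next
  fix c m x assume c: "c \<in> igs_S sierpinski_gasket" and x: "x \<in> words sierpinski_gasket (Suc m)"
  then obtain d x' where "x = d # x'" "length x' = m" by (cases x) (auto simp: words_def)
  then show "Fg c x \<in> words sierpinski_gasket m" using gS by (auto simp: Fg_def words_def)
next
  fix m x y assume "(x, y) \<in> edges sierpinski_gasket m"
  then show "x \<in> words sierpinski_gasket m \<and> y \<in> words sierpinski_gasket m"
    by (rule edges_words[rotated 2]) (auto simp: sierpinski_gasket_def)
qed



abbreviation "P \<equiv> pentagonal_carpet"

definition gl :: "nat \<Rightarrow> nat \<Rightarrow> nat \<Rightarrow> bool" where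
  "gl p a b \<longleftrightarrow> (a = (p + 1) mod 5 \<and> b = p) \<or> (a = (p + 2) mod 5 \<and> b = (p + 4) mod 5)"

lemma pS: "igs_S P = {0,1,2,3,4}" by (simp add: pentagonal_carpet_def)

lemma pS': "i \<in> igs_S P \<longleftrightarrow> i < 5" by (auto simp: pS)

lemma pE: "(p, q) \<in> igs_E P \<longleftrightarrow> p < 5 \<and> q = (p + 1) mod 5"
proof -
  have "p < 5 \<longleftrightarrow> p = 0 \<or> p = 1 \<or> p = 2 \<or> p = 3 \<or> p = 4" by arith
  then show ?thesis by (auto simp: pentagonal_carpet_def)
qed

lemma ptype: "igs_type P e = fst e" by (simp add: pentagonal_carpet_def)

lemma pglue: "p < 5 \<Longrightarrow> (a, b) \<in> igs_glue P p \<longleftrightarrow> gl p a b"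
proof -
  assume "p < 5"
  then have "p = 0 \<or> p = 1 \<or> p = 2 \<or> p = 3 \<or> p = 4" by arith
  then show ?thesis by (elim disjE) (auto simp: pentagonal_carpet_def gl_def)
qed

definition pedge :: "nat \<Rightarrow> nat list \<Rightarrow> nat list \<Rightarrow> bool" where
  "pedge m x y \<longleftrightarrow> (\<exists>z p u u'. x = z @ p # u \<and> y = z @ ((p + 1) mod 5) # u' \<and> p < 5
     \<and> (\<forall>i \<in> set z. i < 5) \<and> list_all2 (gl p) u u' \<and> m = Suc (length z + length u))"

lemma pedge_iff: "(x, y) \<in> edges P m \<longleftrightarrow> pedge m x y"
proof
  assume "(x, y) \<in> edges P m"
  then obtain t z p q a b where h: "x = z @ p # a" "y = z @ q # b" "set z \<subseteq> igs_S P"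
   "(p, q) \<in> igs_E P" "t = igs_type P (p, q)"
   "list_all2 (\<lambda>x y. (x, y) \<in> igs_glue P t) a b" "m = Suc (length z + length a)"
    unfolding edges_char ech_def by blast
  have p: "p < 5" "q = (p + 1) mod 5" "t = p" using h(4,5) pE ptype by auto
  have "list_all2 (gl p) a b" using h(6) p pglue[of p]
    by (simp add: list_all2_conv_all_nth)
  then show "pedge m x y" unfolding pedge_def using h p pS'
    by (rule_tac x=z in exI) auto
next
  assume "pedge m x y"
  then obtain z p u u' where h: "x = z @ p # u" "y = z @ ((p + 1) mod 5) # u'" "p < 5"
     "\<forall>i \<in> set z. i < 5" "list_all2 (gl p) u u'" "m = Suc (length z + length u)"
    unfolding pedge_def by blast
  have "list_all2 (\<lambda>a b. (a, b) \<in> igs_glue P (igs_type P (p, (p + 1) mod 5))) u u'"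
    using h(3,5) pglue[of p] ptype by (simp add: list_all2_conv_all_nth)
  then have "ech P m x y (igs_type P (p, (p + 1) mod 5))" unfolding ech_def
    using h pE pS' by (rule_tac x=z in exI) auto
  then show "(x, y) \<in> edges P m" unfolding edges_char by blast
qed

definition phom :: "nat \<Rightarrow> nat \<Rightarrow> (nat list \<Rightarrow> nat list) \<Rightarrow> bool" where
  "phom m m' f \<longleftrightarrow> (\<forall>x y. pedge m x y \<longrightarrow> f x = f y \<or> pedge m' (f x) (f y) \<or> pedge m' (f y) (f x))"

lemma phom_comp: "phom m m' f \<Longrightarrow> phom m' m'' g \<Longrightarrow> phom m m'' (g \<circ> f)"
  unfolding phom_def by (metis comp_apply)

lemma phom_hom: "phom m m' f \<Longrightarrow> hom P m m' f"
  unfolding phom_def hom_def has_edge_def pedge_iff by blast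

lemma phom_id: "phom m m (\<lambda>x. x)"
  unfolding phom_def by blast

definition rot :: "nat \<Rightarrow> nat \<Rightarrow> nat" where "rot k i = (i + k) mod 5"
definition rfl5 :: "nat \<Rightarrow> nat \<Rightarrow> nat" where "rfl5 k i = (k + 5 - i) mod 5"

lemma gl_lt: "gl p a b \<Longrightarrow> p < 5 \<Longrightarrow> a < 5 \<and> b < 5"
  unfolding gl_def by auto

lemma lt5: "p < (5::nat) \<Longrightarrow> p = 0 \<or> p = 1 \<or> p = 2 \<or> p = 3 \<or> p = 4" by arith
lemma le5: "p \<le> (5::nat) \<Longrightarrow> p = 0 \<or> p = 1 \<or> p = 2 \<or> p = 3 \<or> p = 4 \<or> p = 5" by arith

lemma gl_rot: "gl p a b \<Longrightarrow> p < 5 \<Longrightarrow> k \<le> 5 \<Longrightarrow> gl (rot k p) (rot k a) (rot k b)"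
  apply (drule lt5, drule le5) unfolding gl_def rot_def by (elim disjE) auto

lemma gl_refl: "gl p a b \<Longrightarrow> p < 5 \<Longrightarrow> k \<le> 5 \<Longrightarrow> gl (rfl5 k ((p + 1) mod 5)) (rfl5 k b) (rfl5 k a)"
  apply (drule lt5, drule le5) unfolding gl_def rfl5_def by (elim disjE) auto

lemma rot_succ: "p < 5 \<Longrightarrow> k \<le> 5 \<Longrightarrow> rot k ((p + 1) mod 5) = (rot k p + 1) mod 5"
  apply (drule lt5, drule le5) unfolding rot_def by (elim disjE) auto

lemma refl_succ: "p < 5 \<Longrightarrow> k \<le> 5 \<Longrightarrow> rfl5 k p = (rfl5 k ((p + 1) mod 5) + 1) mod 5"
  apply (drule lt5, drule le5) unfolding rfl5_def by (elim disjE) auto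

lemma rot_lt: "rot k i < 5" by (simp add: rot_def)
lemma refl_lt: "rfl5 k i < 5" by (simp add: rfl5_def)

lemma pedge_rot: "k \<le> 5 \<Longrightarrow> pedge m x y \<Longrightarrow> pedge m (map (rot k) x) (map (rot k) y)"
proof -
  assume k: "k \<le> 5" and "pedge m x y"
  then obtain z p u u' where h: "x = z @ p # u" "y = z @ ((p + 1) mod 5) # u'" "p < 5"
     "\<forall>i \<in> set z. i < 5" "list_all2 (gl p) u u'" "m = Suc (length z + length u)"
    unfolding pedge_def by blast
  have "list_all2 (gl (rot k p)) (map (rot k) u) (map (rot k) u')"
    using h(5) h(3) k by (auto simp: list_all2_map1 list_all2_map2 gl_rot elim: list_all2_mono)
  then show ?thesis unfolding pedge_def using h rot_lt rot_succ[OF h(3) k]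
    by (rule_tac x="map (rot k) z" in exI, rule_tac x="rot k p" in exI) auto
qed

lemma pedge_refl: "k \<le> 5 \<Longrightarrow> pedge m x y \<Longrightarrow> pedge m (map (rfl5 k) y) (map (rfl5 k) x)"
proof -
  assume k: "k \<le> 5" and "pedge m x y"
  then obtain z p u u' where h: "x = z @ p # u" "y = z @ ((p + 1) mod 5) # u'" "p < 5"
     "\<forall>i \<in> set z. i < 5" "list_all2 (gl p) u u'" "m = Suc (length z + length u)"
    unfolding pedge_def by blast
  let ?p = "rfl5 k ((p + 1) mod 5)"
  have "list_all2 (gl ?p) (map (rfl5 k) u') (map (rfl5 k) u)"
    using h(5) h(3) k gl_refl[of p _ _ k] by (auto simp: list_all2_conv_all_nth)
  moreover have "length u' = length u" using h(5) by (simp add: list_all2_lengthD)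
  ultimately show ?thesis unfolding pedge_def using h refl_lt refl_succ[OF h(3) k]
    by (rule_tac x="map (rfl5 k) z" in exI, rule_tac x="?p" in exI) auto
qed

lemma phom_rot: "k \<le> 5 \<Longrightarrow> phom m m (map (rot k))"
  unfolding phom_def using pedge_rot by blast

lemma phom_refl: "k \<le> 5 \<Longrightarrow> phom m m (map (rfl5 k))"
  unfolding phom_def using pedge_refl by blast



definition keep :: "nat list \<Rightarrow> bool" where
  "keep x = (case filter (\<lambda>i. i \<noteq> 0) x of [] \<Rightarrow> True | a # _ \<Rightarrow> a = 1 \<or> a = 2)"

definition f0 :: "nat list \<Rightarrow> nat list" where
  "f0 x = (if keep x then x else map (rfl5 0) x)"

lemma keep_app0: "\<forall>i \<in> set z. i = 0 \<Longrightarrow> keep (z @ v) = keep v"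
proof -
  assume "\<forall>i \<in> set z. i = 0"
  then have "filter (\<lambda>i. i \<noteq> 0) z = []" by (simp add: filter_empty_conv)
  then show ?thesis by (simp add: keep_def)
qed

lemma keep_app: "\<exists>i \<in> set z. i \<noteq> 0 \<Longrightarrow> keep (z @ v) = keep z"
proof -
  assume "\<exists>i \<in> set z. i \<noteq> 0"
  then have "filter (\<lambda>i. i \<noteq> 0) z \<noteq> []" by (simp add: filter_empty_conv)
  then obtain a r where "filter (\<lambda>i. i \<noteq> 0) z = a # r" by (cases "filter (\<lambda>i. i \<noteq> 0) z") auto
  then show ?thesis by (simp add: keep_def)
qed

lemma keep_0: "keep (0 # v) = keep v" by (simp add: keep_def)
lemma keep_nz: "a \<noteq> 0 \<Longrightarrow> keep (a # v) = (a = 1 \<or> a = 2)" by (simp add: keep_def)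

lemma keep_12: "\<forall>a \<in> set v. a = 1 \<or> a = 2 \<Longrightarrow> keep v"
  by (cases v) (auto simp: keep_def)

lemma keep_34: "\<forall>a \<in> set v. a = 3 \<or> a = 4 \<Longrightarrow> v \<noteq> [] \<Longrightarrow> \<not> keep v"
  by (cases v) (auto simp: keep_def)

lemma refl0_zero: "\<forall>i \<in> set z. i = 0 \<Longrightarrow> map (rfl5 0) z = z"
  by (induction z) (auto simp: rfl5_def)

lemma map_from_rel: "list_all2 Q u u' \<Longrightarrow> (\<And>a b. Q a b \<Longrightarrow> f b = a) \<Longrightarrow> map f u' = u"
  by (induction u u' rule: list_all2_induct) auto

lemma map_from_rel2: "list_all2 Q u u' \<Longrightarrow> (\<And>a b. Q a b \<Longrightarrow> f a = g b) \<Longrightarrow> map f u = map g u'"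
  by (induction u u' rule: list_all2_induct) auto

lemma set_rel1: "list_all2 Q u u' \<Longrightarrow> (\<And>a b. Q a b \<Longrightarrow> R a) \<Longrightarrow> \<forall>a \<in> set u. R a"
  by (induction u u' rule: list_all2_induct) auto

lemma set_rel2: "list_all2 Q u u' \<Longrightarrow> (\<And>a b. Q a b \<Longrightarrow> R b) \<Longrightarrow> \<forall>b \<in> set u'. R b"
  by (induction u u' rule: list_all2_induct) auto

lemma pedge_sym_refl0: "pedge m x y \<Longrightarrow> pedge m (map (rfl5 0) y) (map (rfl5 0) x)"
  using pedge_refl[of 0] by simp

lemma phom_f0: "phom m m f0"
  unfolding phom_def
proof (intro allI impI)
  fix x y assume e: "pedge m x y"
  then obtain z p u u' where h: "x = z @ p # u" "y = z @ ((p + 1) mod 5) # u'" "p < 5"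
     "\<forall>i \<in> set z. i < 5" "list_all2 (gl p) u u'" "m = Suc (length z + length u)"
    unfolding pedge_def by blast
  show "f0 x = f0 y \<or> pedge m (f0 x) (f0 y) \<or> pedge m (f0 y) (f0 x)"
  proof (cases "\<exists>i \<in> set z. i \<noteq> 0")
    case True
    then have "keep x = keep y" using h keep_app by simp
    then show ?thesis using e pedge_sym_refl0 by (auto simp: f0_def)
  next
    case False
    then have z0: "\<forall>i \<in> set z. i = 0" by blast
    have kx: "keep x = keep (p # u)" and ky: "keep y = keep (((p + 1) mod 5) # u')"
      using keep_app0[OF z0] h by simp_all
    have rz: "map (rfl5 0) z = z" using refl0_zero[OF z0] .
    from lt5[OF h(3)] show ?thesis
    proof (elim disjE)
      assume p: "p = 0"
      have "\<forall>a \<in> set u. a = 1 \<or> a = 2" by (rule set_rel1[OF h(5)]) (auto simp: gl_def p)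
      then have "keep x" using kx p keep_0 keep_12 by simp
      moreover have "keep y" using ky p keep_nz by simp
      ultimately show ?thesis using e by (simp add: f0_def)
    next
      assume p: "p = 1"
      have "keep x" "keep y" using kx ky p keep_nz by simp_all
      then show ?thesis using e by (simp add: f0_def)
    next
      assume p: "p = 2"
      have "keep x" "\<not> keep y" using kx ky p keep_nz by simp_all
      moreover have "map (rfl5 0) u' = u"
        by (rule map_from_rel[OF h(5)]) (auto simp: gl_def rfl5_def p)
      ultimately have "f0 x = f0 y" using h p rz by (simp add: f0_def rfl5_def)
      then show ?thesis by simp
    next
      assume p: "p = 3"
      have "\<not> keep x" "\<not> keep y" using kx ky p keep_nz by simp_all
      then show ?thesis using pedge_sym_refl0[OF e] by (simp add: f0_def)
    next
      assume p: "p = 4"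
      have "\<not> keep x" using kx p keep_nz by simp
      moreover have "f0 y = map (rfl5 0) y"
      proof (cases "u' = []")
        case True
        then have "map (rfl5 0) y = y" using h p rz by (simp add: rfl5_def)
        then show ?thesis by (simp add: f0_def)
      next
        case False
        have "\<forall>b \<in> set u'. b = 3 \<or> b = 4" by (rule set_rel2[OF h(5)]) (auto simp: gl_def p)
        then have "\<not> keep y" using ky p keep_0 keep_34 False by simp
        then show ?thesis by (simp add: f0_def)
      qed
      ultimately show ?thesis using pedge_sym_refl0[OF e] by (simp add: f0_def)
    qed
  qed
qed



definition H :: "nat \<Rightarrow> nat list \<Rightarrow> nat list" where
  "H d x = (if d = 0 then x else if d = 1 then map (rfl5 1) x else if d = 2 then map (rot 3) x
            else if d = 3 then f0 (map (rot 2) x) else map (rfl5 4) x)"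

lemma phom_H: "phom m m (H d)"
proof -
  have "phom m m (f0 \<circ> map (rot 2))" using phom_comp[OF phom_rot phom_f0] by simp
  then have a: "phom m m (\<lambda>x. f0 (map (rot 2) x))" by (simp add: comp_def)
  have "H d = (\<lambda>x. x) \<or> H d = map (rfl5 1) \<or> H d = map (rot 3) \<or> H d = (\<lambda>x. f0 (map (rot 2) x))
        \<or> H d = map (rfl5 4)"
    unfolding H_def by (cases "d = 0"; cases "d = 1"; cases "d = 2"; cases "d = 3") (simp_all add: fun_eq_iff)
  then show ?thesis
    using a phom_id phom_refl[of 1] phom_refl[of 4] phom_rot[of 3] by auto
qed

definition F0 :: "nat list \<Rightarrow> nat list" where
  "F0 x = (case x of [] \<Rightarrow> [] | d # x' \<Rightarrow> H d x')"

lemma phom_F0: "phom (Suc m) m F0"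
  unfolding phom_def
proof (intro allI impI)
  fix x y assume e: "pedge (Suc m) x y"
  then obtain z p u u' where h: "x = z @ p # u" "y = z @ ((p + 1) mod 5) # u'" "p < 5"
     "\<forall>i \<in> set z. i < 5" "list_all2 (gl p) u u'" "Suc m = Suc (length z + length u)"
    unfolding pedge_def by blast
  show "F0 x = F0 y \<or> pedge m (F0 x) (F0 y) \<or> pedge m (F0 y) (F0 x)"
  proof (cases z)
    case (Cons d z')
    have "pedge m (z' @ p # u) (z' @ ((p + 1) mod 5) # u')"
      unfolding pedge_def using h Cons by (rule_tac x=z' in exI) auto
    then show ?thesis using phom_H[of m d] h Cons unfolding phom_def by (simp add: F0_def)
  next
    case Nil
    then have fx: "F0 x = H p u" and fy: "F0 y = H ((p + 1) mod 5) u'" using h by (simp_all add: F0_def)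
    have "H p u = H ((p + 1) mod 5) u'"
      using lt5[OF h(3)]
    proof (elim disjE)
      assume p: "p = 0"
      have "map (rfl5 1) u' = u" by (rule map_from_rel[OF h(5)]) (auto simp: gl_def rfl5_def p)
      then show ?thesis using p by (simp add: H_def)
    next
      assume p: "p = 1"
      have "map (rfl5 1) u = map (rot 3) u'" by (rule map_from_rel2[OF h(5)]) (auto simp: gl_def rfl5_def rot_def p)
      then show ?thesis using p by (simp add: H_def)
    next
      assume p: "p = 2"
      have "\<forall>b \<in> set u'. b = 1 \<or> b = 2" by (rule set_rel2[OF h(5)]) (auto simp: gl_def p)
      then have "\<forall>a \<in> set (map (rot 2) u'). a = 3 \<or> a = 4" by (auto simp: rot_def)
      then have "f0 (map (rot 2) u') = map (rfl5 0) (map (rot 2) u')"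
        using keep_34 by (cases u') (auto simp: f0_def)
      moreover have "map (rot 3) u = map (rfl5 0 \<circ> rot 2) u'"
        by (rule map_from_rel2[OF h(5)]) (auto simp: gl_def rfl5_def rot_def p)
      ultimately show ?thesis using p by (simp add: H_def)
    next
      assume p: "p = 3"
      have "\<forall>a \<in> set u. a = 4 \<or> a = 0" by (rule set_rel1[OF h(5)]) (auto simp: gl_def p)
      then have "\<forall>a \<in> set (map (rot 2) u). a = 1 \<or> a = 2" by (auto simp: rot_def)
      then have "f0 (map (rot 2) u) = map (rot 2) u"
        using keep_12 by (simp add: f0_def)
      moreover have "map (rot 2) u = map (rfl5 4) u'"
        by (rule map_from_rel2[OF h(5)]) (auto simp: gl_def rfl5_def rot_def p)
      ultimately show ?thesis using p by (simp add: H_def)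
    next
      assume p: "p = 4"
      have "map (rfl5 4) u = map (\<lambda>b. b) u'" by (rule map_from_rel2[OF h(5)]) (auto simp: gl_def rfl5_def p)
      then show ?thesis using p by (simp add: H_def)
    qed
    then show ?thesis using fx fy by simp
  qed
qed

definition Fc :: "nat \<Rightarrow> nat list \<Rightarrow> nat list" where
  "Fc c x = map (rot c) (F0 (map (rot (5 - c)) x))"

lemma Fc_hom:
  assumes c: "c \<in> igs_S P"
  shows "hom P (Suc m) m (Fc c)"
proof -
  have "c \<le> 5" using c pS' by simp
  then have "phom (Suc m) m (map (rot c) \<circ> F0 \<circ> map (rot (5 - c)))"
    using phom_comp[OF phom_comp[OF phom_rot[of "5 - c"] phom_F0] phom_rot[of c]] by (simp add: comp_assoc)
  then show ?thesis unfolding Fc_def by (intro phom_hom) (simp add: comp_def)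
qed

lemma pentagon_main:
  assumes "set w \<subseteq> igs_S P"
  shows "\<exists>\<phi>. graph_folding (words P (n + length w)) (edges P (n + length w))
                   {w @ u | u. u \<in> words P n} \<phi>"
proof (rule generic[OF Fc_hom _ _ assms])
  fix c m x assume c: "c \<in> igs_S P" and x: "x \<in> words P m"
  have c5: "c < 5" using c pS' by simp
  then have r: "rot (5 - c) c = 0" by (simp add: rot_def)
  have "\<forall>i \<in> set x. i < 5" using x pS' by (auto simp: words_def)
  moreover have "rot c (rot (5 - c) i) = i" if "i < 5" for i
    using that c5 by (simp add: rot_def mod_add_left_eq)
  ultimately have "map (rot c) (map (rot (5 - c)) x) = x" by (induction x) auto
  then show "Fc c (c # x) = x" using r by (simp add: Fc_def F0_def H_def)
next
  fix c m x assume c: "c \<in> igs_S P" and x: "x \<in> words P (Suc m)"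
  then obtain d x' where dx: "x = d # x'" "length x' = m" by (cases x) (auto simp: words_def)
  have "length (H d' v) = length v" for d' v by (simp add: H_def f0_def)
  then show "Fc c x \<in> words P m" using dx pS' rot_lt by (auto simp: Fc_def F0_def words_def)
next
  fix m x y assume "(x, y) \<in> edges P m"
  then show "x \<in> words P m \<and> y \<in> words P m"
    by (rule edges_words[rotated 2]) (auto simp: pentagonal_carpet_def)
qed

theorem proposition4p10:
  fixes R :: igs and n :: nat and w :: "nat list"
  assumes "R = sierpinski_gasket \<or> R = pentagonal_carpet"
    and "w \<in> all_words R"
  shows "\<exists>\<phi>. graph_folding (words R (n + length w)) (edges R (n + length w))
                   {w @ u | u. u \<in> words R n} \<phi>"
proof -
  have w: "set w \<subseteq> igs_S R" using assms(2) by (auto simp: all_words_def words_def)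
  from assms(1) show ?thesis
  proof
    assume "R = sierpinski_gasket" then show ?thesis using gasket_main w by simp
  next
    assume "R = pentagonal_carpet" then show ?thesis using pentagon_main w by simp
  qed
qed

end
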